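(* Let $m\in\mathbb{N}$, $A=\langle a\rangle\le\mathrm{Sym}(3)$ with $a=(1\,2\,3)$, $B=(\mathbb{Z}/3\mathbb{Z})^m$, and let $\omega=\omega_0\omega_1\dots$ be a sequence of epimorphisms $\omega_i\colon B\to A$ with $\bigcap_{i\ge k}\ker(\omega_i)=\{1\}$ for all $k\in\mathbb{N}$. Let $g\in G_\omega$ with $|g|_\omega=n\ge 1$, written as $g=\beta_1^{a^{c_1}}\beta_2^{a^{c_2}}\cdots\beta_n^{a^{c_n}}a^{s}$ with $s\in\mathbb{Z}/3\mathbb{Z}$, $\beta\colon\{1,\dots,n\}\to B_\omega$ and $c\colon\{1,\dots,n\}\to\mathbb{Z}/3\mathbb{Z}$. If $g\in\mathcal{I}_\infty^\omega$, then there exists $m_c\in\{1,2,\dots,n\}$ such that for all $k\in\{1,\dots,n-1\}$, $c_{k+1}-c_k=2$ if $k<m_c$ and $c_{k+1}-c_k=1$ if $k\ge m_c$.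
   Context: $T_3$ is the $3$-regular rooted tree; elements of $\mathrm{Sym}(3)$ act as rooted automorphisms $\tau(xw)=\tau(x)w$; for $g$ fixing the first level, $g=(g_1,g_2,g_3)$ lists the restrictions of $g$ to the three subtrees below the root, and every automorphism is uniquely $(g_1,g_2,g_3)\tau$ with $\tau\in\mathrm{Sym}(3)$. For $b\in B_\omega$ and $i\in\mathbb{Z}/3\mathbb{Z}$, $b^{a^i}=a^iba^{-i}$. Let $\sigma$ be the left shift on sequences. Define recursively $\beta_\omega\colon B\to\mathrm{Aut}(T_3)$ by $\beta_\omega(b)=(\omega_0(b),1,\beta_{\sigma(\omega)}(b))$, $B_\omega=\beta_\omega(B)$, $G_\omega=\langle A,B_\omega\rangle$. The word pseudonorm $|\cdot|_\omega$ on $G_\omega$ gives length $0$ to elements of $A$ and length $1$ to nontrivial elements of $B_\omega$ ($|g|_\omega$ = minimal total length of an expression of $g$ as a product of such generators). Incompressible elements: $\mathcal{I}_0^{\sigma^\nu(\omega)}=G_{\sigma^\nu(\omega)}$; $\mathcal{I}_k^{\sigma^\nu(\omega)}$ is the set of $g=(g_1,g_2,g_3)\tau\in G_{\sigma^\nu(\omega)}$ with $g_i\in\mathcal{I}_{k-1}^{\sigma^{\nu+1}(\omega)}$ and $\sum_i|g_i|_{\sigma^{\nu+1}(\omega)}=|g|_{\sigma^\nu(\omega)}$; $\mathcal{I}_\infty^\omega=\bigcap_{k\ge1}\mathcal{I}_k^\omega$. *)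

theory Defs
  imports "HOL-Algebra.Coset"
begin

text \<open>Vertices of the 3-regular rooted tree T_3 are words over the letters 0,1,2
  (letter i+1 of the paper is letter i here), represented as nat lists. Automorphisms are
  represented as functions nat list => nat list acting on the left (composition is (\<circ>));
  all the maps below fix words containing letters >= 3, so this is only a representation.\<close>

type_synonym tmap = "nat list \<Rightarrow> nat list"

fun arot :: tmap where
  "arot [] = []"
| "arot (x # w) = (if x < 3 then (x + 1) mod 3 else x) # w"

definition apow :: "int \<Rightarrow> tmap" where
  "apow i = arot ^^ nat (i mod 3)"

definition Aset :: "tmap set" where
  "Aset = {arot ^^ j | j. j < 3}"

definition Agrp :: "tmap monoid" where
  "Agrp = \<lparr>carrier = Aset, mult = (\<circ>), one = id\<rparr>"

definition Bgrp :: "nat \<Rightarrow> (nat \<Rightarrow> int) monoid" where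
  "Bgrp m = \<lparr>carrier = {v. \<forall>j. 0 \<le> v j \<and> v j < 3 \<and> (m \<le> j \<longrightarrow> v j = 0)},
             mult = (\<lambda>u v j. (u j + v j) mod 3), one = (\<lambda>_. 0)\<rparr>"

definition shift :: "(nat \<Rightarrow> 'a) \<Rightarrow> nat \<Rightarrow> 'a" where
  "shift \<omega> = (\<lambda>i. \<omega> (Suc i))"

fun beta :: "(nat \<Rightarrow> 'b \<Rightarrow> tmap) \<Rightarrow> 'b \<Rightarrow> tmap" where
  "beta \<omega> b [] = []"
| "beta \<omega> b (x # w) =
     (if x = 0 then 0 # \<omega> 0 b w
      else if x = 2 then 2 # beta (\<lambda>i. \<omega> (Suc i)) b w
      else x # w)"

definition Bw :: "nat \<Rightarrow> (nat \<Rightarrow> (nat \<Rightarrow> int) \<Rightarrow> tmap) \<Rightarrow> tmap set" where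
  "Bw m \<omega> = beta \<omega> ` carrier (Bgrp m)"

inductive_set gen_grp :: "tmap set \<Rightarrow> tmap set" for S where
  gen_id: "id \<in> gen_grp S"
| gen_in: "x \<in> S \<Longrightarrow> x \<in> gen_grp S"
| gen_mult: "g \<in> gen_grp S \<Longrightarrow> h \<in> gen_grp S \<Longrightarrow> g \<circ> h \<in> gen_grp S"
| gen_inv: "g \<in> gen_grp S \<Longrightarrow> inv_into UNIV g \<in> gen_grp S"

definition Gw :: "nat \<Rightarrow> (nat \<Rightarrow> (nat \<Rightarrow> int) \<Rightarrow> tmap) \<Rightarrow> tmap set" where
  "Gw m \<omega> = gen_grp (Aset \<union> Bw m \<omega>)"

definition wnorm :: "nat \<Rightarrow> (nat \<Rightarrow> (nat \<Rightarrow> int) \<Rightarrow> tmap) \<Rightarrow> tmap \<Rightarrow> nat" where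
  "wnorm m \<omega> g = (LEAST n. \<exists>xs. set xs \<subseteq> Aset \<union> Bw m \<omega> \<and> foldr (\<circ>) xs id = g \<and>
       n = length (filter (\<lambda>x. x \<in> Bw m \<omega> \<and> x \<noteq> id) xs))"

text \<open>Sections: g = (g_0,g_1,g_2) tau, i.e. g(x w) = tau(x) g_{tau(x)}(w).\<close>
definition sect :: "tmap \<Rightarrow> nat \<Rightarrow> tmap" where
  "sect g i = (\<lambda>w. tl (g (hd (inv_into UNIV g [i]) # w)))"

fun incompr :: "nat \<Rightarrow> (nat \<Rightarrow> (nat \<Rightarrow> int) \<Rightarrow> tmap) \<Rightarrow> nat \<Rightarrow> tmap \<Rightarrow> bool" where
  "incompr m \<omega> 0 g = (g \<in> Gw m \<omega>)"
| "incompr m \<omega> (Suc k) g =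
     (g \<in> Gw m \<omega> \<and> (\<forall>i<3. incompr m (shift \<omega>) k (sect g i)) \<and>
      (\<Sum>i<3. wnorm m (shift \<omega>) (sect g i)) = wnorm m \<omega> g)"

definition incompr_inf :: "nat \<Rightarrow> (nat \<Rightarrow> (nat \<Rightarrow> int) \<Rightarrow> tmap) \<Rightarrow> tmap \<Rightarrow> bool" where
  "incompr_inf m \<omega> g = (\<forall>k\<ge>1. incompr m \<omega> k g)"

definition conjA :: "int \<Rightarrow> tmap \<Rightarrow> tmap" where
  "conjA i b = apow i \<circ> b \<circ> apow (- i)"

end

theory Submission
  imports Defs
begin


lemma arot_pow_Nil[simp]: "(arot ^^ j) [] = []"
  by (induction j) auto

lemma arot_pow_Cons: "(arot ^^ j) (x # w) = (if x < 3 then (x + j) mod 3 else x) # w"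
  by (induction j) (auto simp: mod_Suc_eq)

lemma apow_Cons: "x < 3 \<Longrightarrow> apow i (x # w) = nat ((int x + i) mod 3) # w"
proof -
  assume x: "x < 3"
  have "int ((x + nat (i mod 3)) mod 3) = (int x + i) mod 3"
    by (simp add: zmod_int mod_add_right_eq)
  then have "(x + nat (i mod 3)) mod 3 = nat ((int x + i) mod 3)" by linarith
  then show ?thesis using x by (simp add: apow_def arot_pow_Cons)
qed

lemma apow_ge3: "\<not> x < 3 \<Longrightarrow> apow i (x # w) = x # w"
  by (simp add: apow_def arot_pow_Cons)

lemma apow_Nil[simp]: "apow i [] = []"
  by (simp add: apow_def)

lemma apow_in: "apow i \<in> Aset"
  unfolding apow_def Aset_def by (intro CollectI exI[of _ "nat (i mod 3)"]) auto

lemma id_in: "id \<in> Aset"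
  unfolding Aset_def by (intro CollectI exI[of _ 0]) auto

lemma len_Aset: "f \<in> Aset \<Longrightarrow> length (f w) = length w"
  unfolding Aset_def by (cases w) (auto simp: arot_pow_Cons)

lemma Aset_Bw: "f \<in> Aset \<Longrightarrow> f \<in> Bw m \<omega> \<Longrightarrow> f = id"
proof -
  assume "f \<in> Aset" "f \<in> Bw m \<omega>"
  then obtain j bv where j: "f = arot ^^ j" "j < 3" and b: "f = beta \<omega> bv"
    unfolding Aset_def Bw_def by auto
  have "f [0] = [j]" using j by (simp add: arot_pow_Cons)
  moreover have "hd (f [0]) = 0" using b by simp
  ultimately have "j = 0" by simp
  then show ?thesis using j by simp
qed

lemma apow_comp_id: "d mod 3 = c mod 3 \<Longrightarrow> apow (- c) \<circ> apow d = id"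
proof
  fix w assume h: "d mod 3 = c mod 3"
  show "(apow (- c) \<circ> apow d) w = id w"
  proof (cases w)
    case (Cons x v)
    show ?thesis
    proof (cases "x < 3")
      case True
      have "nat ((int x + d) mod 3) < 3" by (simp add: nat_less_iff)
      moreover have "nat ((int (nat ((int x + d) mod 3)) + - c) mod 3) = x"
      proof -
        have "(int (nat ((int x + d) mod 3)) + - c) mod 3 = ((int x + d) mod 3 - c) mod 3" by simp
        also have "\<dots> = (int x + d - c) mod 3" by (simp add: mod_diff_left_eq)
        also have "\<dots> = int x" using h True by presburger
        finally show ?thesis by simp
      qed
      ultimately show ?thesis using Cons True by (simp add: apow_Cons)
    qed (simp add: Cons apow_ge3)
  qed simp
qed



lemma Bmul_closed: "u \<in> carrier (Bgrp m) \<Longrightarrow> v \<in> carrier (Bgrp m) \<Longrightarrow> u \<otimes>\<^bsub>Bgrp m\<^esub> v \<in> carrier (Bgrp m)"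
  by (auto simp: Bgrp_def)

lemma beta_hom:
  assumes "\<And>i p q. p \<in> carrier (Bgrp m) \<Longrightarrow> q \<in> carrier (Bgrp m) \<Longrightarrow> \<omega> i (p \<otimes>\<^bsub>Bgrp m\<^esub> q) = \<omega> i p \<circ> \<omega> i q"
    and "u \<in> carrier (Bgrp m)" "v \<in> carrier (Bgrp m)"
  shows "beta \<omega> u (beta \<omega> v w) = beta \<omega> (u \<otimes>\<^bsub>Bgrp m\<^esub> v) w"
  using assms
proof (induction w arbitrary: \<omega>)
  case Nil then show ?case by simp
next
  case (Cons x w)
  have IH: "beta (\<lambda>i. \<omega> (Suc i)) u (beta (\<lambda>i. \<omega> (Suc i)) v w) = beta (\<lambda>i. \<omega> (Suc i)) (u \<otimes>\<^bsub>Bgrp m\<^esub> v) w"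
    using Cons.prems by (intro Cons.IH) auto
  show ?case using IH Cons.prems(1)[of u v 0] Cons.prems(2,3) by auto
qed

lemma beta_comp:
  assumes "\<And>i p q. p \<in> carrier (Bgrp m) \<Longrightarrow> q \<in> carrier (Bgrp m) \<Longrightarrow> \<omega> i (p \<otimes>\<^bsub>Bgrp m\<^esub> q) = \<omega> i p \<circ> \<omega> i q"
    and "u \<in> carrier (Bgrp m)" "v \<in> carrier (Bgrp m)"
  shows "beta \<omega> u \<circ> beta \<omega> v = beta \<omega> (u \<otimes>\<^bsub>Bgrp m\<^esub> v)"
  apply (rule ext) apply (subst comp_apply) apply (rule beta_hom) using assms by auto

lemma beta_len:
  assumes "\<And>i p. p \<in> carrier (Bgrp m) \<Longrightarrow> \<omega> i p \<in> Aset" and "u \<in> carrier (Bgrp m)"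
  shows "length (beta \<omega> u w) = length w"
  using assms
proof (induction w arbitrary: \<omega>)
  case (Cons x w)
  have "length (beta (\<lambda>i. \<omega> (Suc i)) u w) = length w"
    using Cons.prems by (intro Cons.IH) auto
  then show ?case using len_Aset[OF Cons.prems(1)[OF Cons.prems(2), of 0]] by auto
qed simp

definition secS :: "(nat \<Rightarrow> (nat \<Rightarrow> int) \<Rightarrow> tmap) \<Rightarrow> int \<Rightarrow> (nat \<Rightarrow> int) \<Rightarrow> nat \<Rightarrow> tmap" where
  "secS \<omega> c bv y = (if (int y - c) mod 3 = 0 then \<omega> 0 bv
     else if (int y - c) mod 3 = 2 then beta (shift \<omega>) bv else id)"

lemma conj_Cons:
  assumes "y < 3"
  shows "conjA c (beta \<omega> bv) (y # w) = y # secS \<omega> c bv y w"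
proof -
  define z where "z = nat ((int y - c) mod 3)"
  have z3: "z < 3" unfolding z_def by (simp add: nat_less_iff)
  have zi: "int z = (int y - c) mod 3" unfolding z_def by simp
  have zback: "nat ((int z + c) mod 3) = y"
  proof -
    have "(int z + c) mod 3 = int y" unfolding zi using assms by (simp add: mod_add_left_eq)
    then show ?thesis by simp
  qed
  have "apow (- c) (y # w) = z # w" unfolding z_def using assms by (simp add: apow_Cons)
  moreover have "beta \<omega> bv (z # w) = z # secS \<omega> c bv y w"
    using z3 zi by (auto simp: secS_def shift_def)
  ultimately show ?thesis unfolding conjA_def using apow_Cons[OF z3] zback by simp
qed

lemma conj_ge3: "\<not> y < 3 \<Longrightarrow> conjA c (beta \<omega> bv) (y # w) = y # w"
  by (simp add: conjA_def apow_ge3)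

lemma conj_Nil: "conjA c (beta \<omega> bv) [] = []"
  by (simp add: conjA_def)



lemma foldr_comp_id: "foldr (\<circ>) xs z = foldr (\<circ>) xs id \<circ> z"
  by (induction xs) auto

lemma F_Cons:
  "y < 3 \<Longrightarrow> foldr (\<circ>) (map (\<lambda>k. conjA (c k) (beta \<omega> (b k))) ks) id (y # w)
     = y # foldr (\<circ>) (map (\<lambda>k. secS \<omega> (c k) (b k) y) ks) id w"
  by (induction ks) (auto simp: conj_Cons)

lemma F_ge3:
  "\<not> y < 3 \<Longrightarrow> foldr (\<circ>) (map (\<lambda>k. conjA (c k) (beta \<omega> (b k))) ks) id (y # w) = y # w"
  by (induction ks) (auto simp: conj_ge3)

lemma F_Nil:
  "foldr (\<circ>) (map (\<lambda>k. conjA (c k) (beta \<omega> (b k))) ks) id [] = []"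
  by (induction ks) (auto simp: conj_Nil)

lemma secS_len:
  assumes "\<And>i p. p \<in> carrier (Bgrp m) \<Longrightarrow> \<omega> i p \<in> Aset" and "bv \<in> carrier (Bgrp m)"
  shows "length (secS \<omega> c bv y w) = length w"
proof -
  have "length (beta (shift \<omega>) bv w) = length w"
    by (rule beta_len[of m]) (use assms in \<open>auto simp: shift_def\<close>)
  then show ?thesis using len_Aset[OF assms(1)[OF assms(2)]] by (simp add: secS_def)
qed

lemma Sec_len:
  assumes "\<And>i p. p \<in> carrier (Bgrp m) \<Longrightarrow> \<omega> i p \<in> Aset" and "\<forall>k\<in>set ks. b k \<in> carrier (Bgrp m)"
  shows "length (foldr (\<circ>) (map (\<lambda>k. secS \<omega> (c k) (b k) y) ks) id w) = length w"
  using assms(2) by (induction ks) (auto simp: secS_len[OF assms(1)])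

lemma wnorm_le:
  assumes "set xs \<subseteq> Aset \<union> Bw m \<omega>" "foldr (\<circ>) xs id = g"
    "length (filter (\<lambda>x. x \<in> Bw m \<omega> \<and> x \<noteq> id) xs) \<le> N"
  shows "wnorm m \<omega> g \<le> N"
proof -
  have "wnorm m \<omega> g \<le> length (filter (\<lambda>x. x \<in> Bw m \<omega> \<and> x \<noteq> id) xs)"
    unfolding wnorm_def by (rule Least_le) (use assms in blast)
  then show ?thesis using assms(3) by linarith
qed

lemma apow_notB: "\<not> (apow i \<in> Bw m \<omega> \<and> apow i \<noteq> id)"
  using Aset_Bw[OF apow_in] by blast

lemma apow_notB': "apow i \<in> Bw m \<omega> \<Longrightarrow> apow i = (\<lambda>a. a)"
  using Aset_Bw[OF apow_in] by (simp add: id_def)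

definition blk :: "(nat \<Rightarrow> (nat \<Rightarrow> int) \<Rightarrow> tmap) \<Rightarrow> (nat \<Rightarrow> int) \<Rightarrow> (nat \<Rightarrow> nat \<Rightarrow> int) \<Rightarrow> nat \<Rightarrow> tmap list" where
  "blk \<omega> c b k = [apow (c k), beta \<omega> (b k), apow (- c k)]"

lemma blk_foldr:
  "foldr (\<circ>) (concat (map (blk \<omega> c b) ks)) z = foldr (\<circ>) (map (\<lambda>k. conjA (c k) (beta \<omega> (b k))) ks) z"
  by (induction ks) (auto simp: blk_def conjA_def)

lemma blk_count:
  "length (filter (\<lambda>x. x \<in> Bw m \<omega> \<and> x \<noteq> id) (concat (map (blk \<omega> c b) ks))) \<le> length ks"
proof (induction ks)
  case (Cons k ks)
  have "length (filter (\<lambda>x. x \<in> Bw m \<omega> \<and> x \<noteq> id) (blk \<omega> c b k)) \<le> 1"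
    using apow_notB[of "c k" m \<omega>] apow_notB[of "- c k" m \<omega>] unfolding blk_def
    by (simp only: filter.simps) (simp split: if_splits)
  then show ?case using Cons.IH by (simp only: concat.simps list.map filter_append length_append list.size)
qed simp

lemma blk_set:
  "\<forall>k\<in>set ks. b k \<in> carrier (Bgrp m) \<Longrightarrow> set (concat (map (blk \<omega> c b) ks)) \<subseteq> Aset \<union> Bw m \<omega>"
  by (induction ks) (auto simp: blk_def apow_in Bw_def)



lemma upt_split3:
  assumes "1 \<le> k" "k + 1 \<le> n"
  shows "[1..<n+1] = [1..<k] @ [k, k+1] @ [k+2..<n+1]"
proof -
  have "[1..<n+1] = [1..<k] @ [k..<n+1]" using assms upt_add_eq_append[of 1 k "n+1-k"] by simp
  also have "[k..<n+1] = [k, k+1] @ [k+2..<n+1]" using assms by (simp add: upt_conv_Cons)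
  finally show ?thesis .
qed

lemma claimA:
  assumes H1: "\<And>i p q. p \<in> carrier (Bgrp m) \<Longrightarrow> q \<in> carrier (Bgrp m) \<Longrightarrow> \<omega> i (p \<otimes>\<^bsub>Bgrp m\<^esub> q) = \<omega> i p \<circ> \<omega> i q"
    and bc: "\<forall>k\<in>{1..n}. b k \<in> carrier (Bgrp m)"
    and gdef: "g = foldr (\<circ>) (map (\<lambda>k. conjA (c k) (beta \<omega> (b k))) [1..<n+1]) (apow s)"
    and k: "1 \<le> k" "k + 1 \<le> n" and d: "(c (k+1) - c k) mod 3 = 0"
  shows "wnorm m \<omega> g \<le> n - 1"
proof -
  let ?conj = "\<lambda>k. conjA (c k) (beta \<omega> (b k))"
  define pre where "pre = [1..<k]"
  define suf where "suf = [k+2..<n+1]"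
  define bm where "bm = b k \<otimes>\<^bsub>Bgrp m\<^esub> b (k+1)"
  have bk: "b k \<in> carrier (Bgrp m)" "b (k+1) \<in> carrier (Bgrp m)" using bc k by auto
  have bmc: "bm \<in> carrier (Bgrp m)" unfolding bm_def using bk by (rule Bmul_closed)
  define xs where "xs = concat (map (blk \<omega> c b) pre) @ [apow (c k), beta \<omega> bm, apow (- c k)]
     @ concat (map (blk \<omega> c b) suf) @ [apow s]"
  have split: "[1..<n+1] = pre @ [k, k+1] @ suf" unfolding pre_def suf_def using upt_split3[OF k] .
  have e1: "apow (- c k) (apow (c (k+1)) x) = x" for x
  proof -
    have "c (k+1) mod 3 = c k mod 3" using d by presburger
    from fun_cong[OF apow_comp_id[OF this], of x] show ?thesis by simp
  qed
  have e2: "apow (- c (k+1)) = apow (- c k)"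
  proof -
    have "(- c (k+1)) mod 3 = (- c k) mod 3" using d by presburger
    then show ?thesis by (simp add: apow_def)
  qed
  have e3: "beta \<omega> (b k) (beta \<omega> (b (k+1)) x) = beta \<omega> bm x" for x
    unfolding bm_def by (rule beta_hom[OF _ bk]) (rule H1)
  have merge: "?conj k \<circ> (?conj (k+1) \<circ> r) = apow (c k) \<circ> (beta \<omega> bm \<circ> (apow (- c k) \<circ> r))" for r
    by (simp add: fun_eq_iff conjA_def e1[simplified] e2[simplified] e3[simplified])
  have "foldr (\<circ>) xs id = g"
    unfolding xs_def gdef split
    by (simp add: blk_foldr merge[simplified] del: upt_Suc)
  moreover have "set xs \<subseteq> Aset \<union> Bw m \<omega>"
  proof -
    have "\<forall>k\<in>set pre. b k \<in> carrier (Bgrp m)" "\<forall>k\<in>set suf. b k \<in> carrier (Bgrp m)"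
      using bc k unfolding pre_def suf_def by auto
    then show ?thesis unfolding xs_def using blk_set bmc by (auto simp: apow_in Bw_def)
  qed
  moreover have "length (filter (\<lambda>x. x \<in> Bw m \<omega> \<and> x \<noteq> id) xs) \<le> n - 1"
  proof -
    let ?P = "\<lambda>x. x \<in> Bw m \<omega> \<and> x \<noteq> id"
    have "length (filter ?P [apow (c k), beta \<omega> bm, apow (- c k)]) \<le> 1"
      using apow_notB[of "c k" m \<omega>] apow_notB[of "- c k" m \<omega>]
      by (simp only: filter.simps) (simp split: if_splits)
    moreover have "length (filter ?P [apow s]) = 0"
      using apow_notB[of s m \<omega>] by (simp only: filter.simps) (simp split: if_splits)
    moreover note blk_count[of m \<omega> c b pre] blk_count[of m \<omega> c b suf]
    moreover have "length pre + 1 + length suf = n - 1" unfolding pre_def suf_def using k by auto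
    ultimately show ?thesis unfolding xs_def
      by (simp only: filter_append length_append)
  qed
  ultimately show ?thesis using wnorm_le by blast
qed



lemma sect_eq:
  assumes H2: "\<And>i p. p \<in> carrier (Bgrp m) \<Longrightarrow> \<omega> i p \<in> Aset"
    and bc: "\<forall>k\<in>{1..n}. b k \<in> carrier (Bgrp m)"
    and gdef: "g = foldr (\<circ>) (map (\<lambda>k. conjA (c k) (beta \<omega> (b k))) [1..<n+1]) (apow s)"
    and i3: "i < 3"
  shows "sect g i = foldr (\<circ>) (map (\<lambda>k. secS \<omega> (c k) (b k) i) [1..<n+1]) id"
proof -
  define F where "F = foldr (\<circ>) (map (\<lambda>k. conjA (c k) (beta \<omega> (b k))) [1..<n+1]) id"
  define Sec where "Sec y = foldr (\<circ>) (map (\<lambda>k. secS \<omega> (c k) (b k) y) [1..<n+1]) id" for y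
  have g: "g = F \<circ> apow s" unfolding gdef F_def by (rule foldr_comp_id)
  have bc': "\<forall>k\<in>set [1..<n+1]. b k \<in> carrier (Bgrp m)" using bc by auto
  have Seclen: "length (Sec y w) = length w" for y w
    unfolding Sec_def by (rule Sec_len[OF H2 bc'])
  have gC: "g (x # w) = nat ((int x + s) mod 3) # Sec (nat ((int x + s) mod 3)) w" if "x < 3" for x w
  proof -
    have "nat ((int x + s) mod 3) < 3" by (simp add: nat_less_iff)
    then show ?thesis using that unfolding g Sec_def F_def by (simp add: apow_Cons F_Cons)
  qed
  have gG: "g (x # w) = x # w" if "\<not> x < 3" for x w
    using that unfolding g F_def by (simp add: apow_ge3 F_ge3)
  have gN: "g [] = []" unfolding g F_def by (simp add: F_Nil)
  define x0 where "x0 = nat ((int i - s) mod 3)"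
  have x03: "x0 < 3" unfolding x0_def by (simp add: nat_less_iff)
  have x0i: "nat ((int x0 + s) mod 3) = i"
  proof -
    have "(int x0 + s) mod 3 = int i" unfolding x0_def using i3 by (simp add: mod_add_left_eq)
    then show ?thesis by simp
  qed
  have gx0: "g (x0 # w) = i # Sec i w" for w using gC[OF x03] x0i by simp
  have inv: "inv_into UNIV g [i] = [x0]"
    unfolding inv_into_def
  proof (rule some_equality)
    show "[x0] \<in> UNIV \<and> g [x0] = [i]" using gx0[of "[]"] Seclen[of i "[]"] by simp
  next
    fix x assume "x \<in> UNIV \<and> g x = [i]"
    then have gx: "g x = [i]" by simp
    show "x = [x0]"
    proof (cases x)
      case Nil then show ?thesis using gx gN by simp
    next
      case (Cons x1 w)
      show ?thesis
      proof (cases "x1 < 3")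
        case True
        have e: "nat ((int x1 + s) mod 3) = i" and w: "Sec (nat ((int x1 + s) mod 3)) w = []"
          using gx gC[OF True, of w] Cons by auto
        have "w = []" using w Seclen by (metis length_0_conv)
        moreover have "x1 = x0"
        proof -
          have "(int x1 + s) mod 3 = int i" using e by simp
          then have "(int i - s) mod 3 = (int x1 + s - s) mod 3" by (metis mod_diff_left_eq)
          then have "(int i - s) mod 3 = int x1" using True by simp
          then show ?thesis unfolding x0_def by simp
        qed
        ultimately show ?thesis using Cons by simp
      next
        case False
        then show ?thesis using gx gG[OF False, of w] Cons i3 by simp
      qed
    qed
  qed
  show ?thesis unfolding sect_def inv using gx0 by (simp add: Sec_def)
qed



lemma filter_map_le:
  "(\<forall>k\<in>set ks. P (f k) \<longrightarrow> Q k) \<Longrightarrow> length (filter P (map f ks)) \<le> length (filter Q ks)"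
  by (induction ks) auto

lemma secS_A:
  assumes H2: "\<And>i p. p \<in> carrier (Bgrp m) \<Longrightarrow> \<omega> i p \<in> Aset" and "bv \<in> carrier (Bgrp m)"
    and "(int y - c) mod 3 \<noteq> 2"
  shows "secS \<omega> c bv y \<in> Aset"
  using assms H2[OF assms(2), of 0] id_in by (simp add: secS_def)

lemma secS_in:
  assumes H2: "\<And>i p. p \<in> carrier (Bgrp m) \<Longrightarrow> \<omega> i p \<in> Aset" and "bv \<in> carrier (Bgrp m)"
  shows "secS \<omega> c bv y \<in> Aset \<union> Bw m (shift \<omega>)"
  using assms H2[OF assms(2), of 0] id_in by (auto simp: secS_def Bw_def)

lemma secS_count:
  assumes H2: "\<And>i p. p \<in> carrier (Bgrp m) \<Longrightarrow> \<omega> i p \<in> Aset"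
    and bc: "\<forall>k\<in>set ks. b k \<in> carrier (Bgrp m)"
  shows "length (filter (\<lambda>x. x \<in> Bw m (shift \<omega>) \<and> x \<noteq> id) (map (\<lambda>k. secS \<omega> (c k) (b k) y) ks))
     \<le> length (filter (\<lambda>k. (int y - c k) mod 3 = 2) ks)"
  apply (rule filter_map_le)
  using secS_A[of m \<omega>, OF H2] bc Aset_Bw by blast

lemma sec_wnorm_le:
  assumes H2: "\<And>i p. p \<in> carrier (Bgrp m) \<Longrightarrow> \<omega> i p \<in> Aset"
    and bc: "\<forall>k\<in>set ks. b k \<in> carrier (Bgrp m)"
  shows "wnorm m (shift \<omega>) (foldr (\<circ>) (map (\<lambda>k. secS \<omega> (c k) (b k) y) ks) id)
     \<le> length (filter (\<lambda>k. (int y - c k) mod 3 = 2) ks)"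
  apply (rule wnorm_le[OF _ refl secS_count[of m \<omega>, OF H2 bc]])
  using secS_in[of m \<omega>, OF H2] bc by auto

lemma upt_split4:
  assumes "1 \<le> k" "k + 2 \<le> n"
  shows "[1..<n+1] = [1..<k] @ [k, k+1, k+2] @ [k+3..<n+1]"
proof -
  have "[1..<n+1] = [1..<k] @ [k..<n+1]" using assms upt_add_eq_append[of 1 k "n+1-k"] by simp
  also have "[k..<n+1] = [k, k+1, k+2] @ [k+3..<n+1]" using assms by (simp add: upt_conv_Cons numeral_3_eq_3)
  finally show ?thesis .
qed

lemma sec_merge:
  assumes H1: "\<And>i p q. p \<in> carrier (Bgrp m) \<Longrightarrow> q \<in> carrier (Bgrp m) \<Longrightarrow> \<omega> i (p \<otimes>\<^bsub>Bgrp m\<^esub> q) = \<omega> i p \<circ> \<omega> i q"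
    and H2: "\<And>i p. p \<in> carrier (Bgrp m) \<Longrightarrow> \<omega> i p \<in> Aset"
    and bc: "\<forall>k\<in>{1..n}. b k \<in> carrier (Bgrp m)"
    and k: "1 \<le> k" "k + 2 \<le> n"
    and q0: "(int y - c k) mod 3 = 2" and q1: "(int y - c (k+1)) mod 3 = 1" and q2: "(int y - c (k+2)) mod 3 = 2"
  shows "wnorm m (shift \<omega>) (foldr (\<circ>) (map (\<lambda>k. secS \<omega> (c k) (b k) y) [1..<n+1]) id) + 1
     \<le> length (filter (\<lambda>k. (int y - c k) mod 3 = 2) [1..<n+1])"
proof -
  let ?S = "\<lambda>k. secS \<omega> (c k) (b k) y"
  let ?Q = "\<lambda>k. (int y - c k) mod 3 = 2"
  define pre where "pre = [1..<k]"
  define suf where "suf = [k+3..<n+1]"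
  define bm where "bm = b k \<otimes>\<^bsub>Bgrp m\<^esub> b (k+2)"
  have bk: "b k \<in> carrier (Bgrp m)" "b (k+2) \<in> carrier (Bgrp m)" using bc k by auto
  have bmc: "bm \<in> carrier (Bgrp m)" unfolding bm_def using bk by (rule Bmul_closed)
  have split: "[1..<n+1] = pre @ [k, k+1, k+2] @ suf" unfolding pre_def suf_def using upt_split4[OF k] .
  have bcp: "\<forall>k\<in>set pre. b k \<in> carrier (Bgrp m)" "\<forall>k\<in>set suf. b k \<in> carrier (Bgrp m)"
    using bc k unfolding pre_def suf_def by auto
  define xs where "xs = map ?S pre @ [beta (shift \<omega>) bm] @ map ?S suf"
  have S0: "?S k = beta (shift \<omega>) (b k)" using q0 by (simp add: secS_def)
  have S1: "?S (k+1) = id" using q1 by (simp add: secS_def)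
  have S2: "?S (k+2) = beta (shift \<omega>) (b (k+2))" using q2 by (simp add: secS_def)
  have e3: "beta (shift \<omega>) (b k) (beta (shift \<omega>) (b (k+2)) x) = beta (shift \<omega>) bm x" for x
    unfolding bm_def by (rule beta_hom[OF _ bk]) (simp add: shift_def H1)
  have merge: "?S k \<circ> (?S (k+1) \<circ> (?S (k+2) \<circ> r)) = beta (shift \<omega>) bm \<circ> r" for r
    unfolding S0 S1 S2 by (simp add: fun_eq_iff e3[simplified])
  have eqx: "foldr (\<circ>) xs id = foldr (\<circ>) (map ?S [1..<n+1]) id"
    unfolding xs_def split by (simp add: merge[simplified] del: upt_Suc)
  moreover have setx: "set xs \<subseteq> Aset \<union> Bw m (shift \<omega>)"
  proof -
    have "\<forall>k\<in>set pre \<union> set suf. ?S k \<in> Aset \<union> Bw m (shift \<omega>)" using secS_in[of m \<omega>, OF H2] bcp by blast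
    moreover have "beta (shift \<omega>) bm \<in> Bw m (shift \<omega>)" unfolding Bw_def using bmc by blast
    ultimately show ?thesis unfolding xs_def by auto
  qed
  moreover have "length (filter (\<lambda>x. x \<in> Bw m (shift \<omega>) \<and> x \<noteq> id) xs) + 1
     \<le> length (filter ?Q [1..<n+1])"
  proof -
    have one: "length (filter (\<lambda>x. x \<in> Bw m (shift \<omega>) \<and> x \<noteq> id) [beta (shift \<omega>) bm]) \<le> 1" by simp
    have "length (filter ?Q [1..<n+1]) = length (filter ?Q pre) + 2 + length (filter ?Q suf)"
      unfolding split using q0 q1 q2 by simp
    moreover have "length (filter (\<lambda>x. x \<in> Bw m (shift \<omega>) \<and> x \<noteq> id) (map ?S pre)) \<le> length (filter ?Q pre)"
      by (rule secS_count) (auto intro: H2 simp: bcp)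
    moreover have "length (filter (\<lambda>x. x \<in> Bw m (shift \<omega>) \<and> x \<noteq> id) (map ?S suf)) \<le> length (filter ?Q suf)"
      by (rule secS_count) (auto intro: H2 simp: bcp)
    ultimately show ?thesis unfolding xs_def
      using one by (simp only: filter_append length_append)
  qed
  moreover have "wnorm m (shift \<omega>) (foldr (\<circ>) (map ?S [1..<n+1]) id)
      \<le> length (filter (\<lambda>x. x \<in> Bw m (shift \<omega>) \<and> x \<noteq> id) xs)"
    by (rule wnorm_le[OF setx eqx order.refl])
  ultimately show ?thesis by linarith
qed



lemma one_hit:
  fixes c :: int
  shows "(if (int 0 - c) mod 3 = 2 then 1 else 0) + (if (int 1 - c) mod 3 = 2 then 1 else 0) + (if (int 2 - c) mod 3 = 2 then 1 else (0::nat)) = 1"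
proof -
  have r: "c mod 3 = 0 \<or> c mod 3 = 1 \<or> c mod 3 = 2" by presburger
  have e: "(j - c) mod 3 = (j - c mod 3) mod 3" for j by (simp add: mod_diff_right_eq)
  show ?thesis using r by (auto simp only: e) simp_all
qed

lemma count_sum:
  "(\<Sum>i<3. length (filter (\<lambda>k. (int i - c k) mod 3 = 2) ks)) = length ks"
proof (induction ks)
  case (Cons k ks)
  have "(\<Sum>i<3. length (filter (\<lambda>k. (int i - c k) mod 3 = 2) (k # ks)))
     = (\<Sum>i<3. (if (int i - c k) mod 3 = 2 then 1 else 0) + length (filter (\<lambda>k. (int i - c k) mod 3 = 2) ks))"
    by (intro sum.cong) auto
  also have "\<dots> = (\<Sum>i<(3::nat). (if (int i - c k) mod 3 = 2 then 1 else 0::nat)) + length ks"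
    by (simp only: sum.distrib Cons.IH)
  also have "(\<Sum>i<(3::nat). (if (int i - c k) mod 3 = 2 then 1 else 0::nat)) = 1"
    using one_hit[of "c k"] by (simp add: numeral_3_eq_3 lessThan_Suc)
  finally show ?case by simp
qed simp

lemma comb:
  fixes d :: "nat \<Rightarrow> int"
  assumes h1: "\<forall>k. 1 \<le> k \<longrightarrow> k + 1 \<le> n \<longrightarrow> d k = 1 \<or> d k = 2"
    and h2: "\<forall>k. 1 \<le> k \<longrightarrow> k + 2 \<le> n \<longrightarrow> \<not> (d k = 1 \<and> d (k+1) = 2)"
    and n: "n \<ge> 1"
  shows "\<exists>mc\<in>{1..n}. \<forall>k\<in>{1..n-1}. (k < mc \<longrightarrow> d k = 2) \<and> (mc \<le> k \<longrightarrow> d k = 1)"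
proof (cases "\<exists>k. 1 \<le> k \<and> k + 1 \<le> n \<and> d k = 1")
  case True
  define mc where "mc = (LEAST k. 1 \<le> k \<and> k + 1 \<le> n \<and> d k = 1)"
  have mcp: "1 \<le> mc \<and> mc + 1 \<le> n \<and> d mc = 1" unfolding mc_def using True by (metis (mono_tags, lifting) LeastI)
  have below: "d k = 2" if "1 \<le> k" "k < mc" for k
  proof -
    have "\<not> (1 \<le> k \<and> k + 1 \<le> n \<and> d k = 1)" using not_less_Least[of k] that unfolding mc_def by blast
    then show ?thesis using h1 that mcp by auto
  qed
  have above: "mc + j + 1 \<le> n \<longrightarrow> d (mc + j) = 1" for j
  proof (induction j)
    case 0 then show ?case using mcp by simp
  next
    case (Suc j)
    show ?case
    proof
      assume a: "mc + Suc j + 1 \<le> n"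
      then have "d (mc + j) = 1" using Suc by simp
      moreover have "d (mc + j + 1) = 1 \<or> d (mc + j + 1) = 2" using h1 a mcp by simp
      moreover have "\<not> (d (mc + j) = 1 \<and> d (mc + j + 1) = 2)" using h2 a mcp by (metis add.assoc le_add1 le_trans one_add_one add_Suc_right plus_1_eq_Suc)
      ultimately show "d (mc + Suc j) = 1" by simp
    qed
  qed
  show ?thesis
  proof (intro bexI[of _ mc] ballI conjI impI)
    fix k assume "k \<in> {1..n-1}" "k < mc" then show "d k = 2" using below by auto
  next
    fix k assume k: "k \<in> {1..n-1}" "mc \<le> k"
    then show "d k = 1" using above[of "k - mc"] by auto
  qed (use mcp in auto)
next
  case False
  show ?thesis
  proof (intro bexI[of _ n] ballI conjI impI)
    fix k assume "k \<in> {1..n-1}" then show "d k = 2" using False h1 by force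
  next
    fix k assume "k \<in> {1..n-1}" "n \<le> k" then show "d k = 1" using n by auto
  qed (use n in auto)
qed

lemma sum3_lemma:
  fixes w cn :: "nat \<Rightarrow> nat"
  assumes "\<forall>i<3. w i \<le> cn i" "y < 3" "w y + 1 \<le> cn y"
  shows "(\<Sum>i<3. w i) + 1 \<le> (\<Sum>i<3. cn i)"
proof -
  have y: "y \<in> {..<3::nat}" using assms by simp
  have "(\<Sum>i\<in>{..<3} - {y}. w i) \<le> (\<Sum>i\<in>{..<3} - {y}. cn i)"
    by (rule sum_mono) (use assms in auto)
  then show ?thesis using sum.remove[OF _ y, of w] sum.remove[OF _ y, of cn] assms(3) by simp
qed

theorem mainTheorem3:
  fixes m n :: nat and \<omega> :: "nat \<Rightarrow> (nat \<Rightarrow> int) \<Rightarrow> tmap" and g :: tmap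
    and \<beta> :: "nat \<Rightarrow> tmap" and c :: "nat \<Rightarrow> int" and s :: int
  assumes epi: "\<forall>i. \<omega> i \<in> epi (Bgrp m) Agrp"
    and ker: "\<forall>k. (\<Inter>i\<in>{k..}. kernel (Bgrp m) Agrp (\<omega> i)) = {\<one>\<^bsub>Bgrp m\<^esub>}"
    and gG: "g \<in> Gw m \<omega>"
    and norm: "wnorm m \<omega> g = n" and n1: "n \<ge> 1"
    and \<beta>B: "\<forall>k\<in>{1..n}. \<beta> k \<in> Bw m \<omega>"
    and expr: "g = foldr (\<circ>) (map (\<lambda>k. conjA (c k) (\<beta> k)) [1..<n+1]) (apow s)"
    and inc: "incompr_inf m \<omega> g"
  shows "\<exists>mc\<in>{1..n}. \<forall>k\<in>{1..n-1}.
           (k < mc \<longrightarrow> (c (k+1) - c k) mod 3 = 2) \<and> (mc \<le> k \<longrightarrow> (c (k+1) - c k) mod 3 = 1)"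
proof -
  have hom: "\<omega> i \<in> hom (Bgrp m) Agrp" for i using epi by (simp add: epi_def)
  have H1: "\<omega> i (p \<otimes>\<^bsub>Bgrp m\<^esub> q) = \<omega> i p \<circ> \<omega> i q"
    if "p \<in> carrier (Bgrp m)" "q \<in> carrier (Bgrp m)" for i p q
    using hom that by (simp add: hom_def Agrp_def)
  have H2: "\<omega> i p \<in> Aset" if "p \<in> carrier (Bgrp m)" for i p
    using hom_in_carrier[OF hom that] by (simp add: Agrp_def)
  have "\<forall>k\<in>{1..n}. \<exists>bv. bv \<in> carrier (Bgrp m) \<and> \<beta> k = beta \<omega> bv"
    using \<beta>B unfolding Bw_def by blast
  then obtain b where bb: "\<forall>k\<in>{1..n}. b k \<in> carrier (Bgrp m) \<and> \<beta> k = beta \<omega> (b k)"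
    by metis
  have bc: "\<forall>k\<in>{1..n}. b k \<in> carrier (Bgrp m)" using bb by blast
  have gdef: "g = foldr (\<circ>) (map (\<lambda>k. conjA (c k) (beta \<omega> (b k))) [1..<n+1]) (apow s)"
  proof -
    have mm: "map (\<lambda>k. conjA (c k) (\<beta> k)) [1..<n+1] = map (\<lambda>k. conjA (c k) (beta \<omega> (b k))) [1..<n+1]"
      using bb by (intro map_cong) auto
    show ?thesis by (simp only: expr mm)
  qed
  have bc': "\<forall>k\<in>set [1..<n+1]. b k \<in> carrier (Bgrp m)" using bc by auto
  define d where "d k = (c (k+1) - c k) mod 3" for k
  have h1: "\<forall>k. 1 \<le> k \<longrightarrow> k + 1 \<le> n \<longrightarrow> d k = 1 \<or> d k = 2"
  proof (intro allI impI)
    fix k assume k: "1 \<le> k" "k + 1 \<le> n"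
    have "d k \<noteq> 0"
    proof
      assume "d k = 0"
      then have "wnorm m \<omega> g \<le> n - 1"
        apply (intro claimA[where m=m and \<omega>=\<omega> and n=n and b=b and c=c and s=s and k=k])
        apply (erule (1) H1)
        using bc gdef k unfolding d_def by auto
      then show False using norm n1 by simp
    qed
    moreover have "0 \<le> d k" "d k < 3" unfolding d_def by auto
    ultimately show "d k = 1 \<or> d k = 2" by linarith
  qed
  have h2: "\<forall>k. 1 \<le> k \<longrightarrow> k + 2 \<le> n \<longrightarrow> \<not> (d k = 1 \<and> d (k+1) = 2)"
  proof (intro allI impI notI)
    fix k assume k: "1 \<le> k" "k + 2 \<le> n" and dd: "d k = 1 \<and> d (k+1) = 2"
    define y where "y = nat ((c k + 2) mod 3)"
    have y3: "y < 3" unfolding y_def by (simp add: nat_less_iff)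
    have yi: "int y = (c k + 2) mod 3" unfolding y_def by simp
    have q0: "(int y - c k) mod 3 = 2" unfolding yi by (simp add: mod_diff_left_eq)
    have q1: "(int y - c (k+1)) mod 3 = 1" using dd unfolding yi d_def by presburger
    have q2: "(int y - c (k+2)) mod 3 = 2" using dd unfolding yi d_def by (simp add: add.commute) presburger
    let ?Sec = "\<lambda>i. foldr (\<circ>) (map (\<lambda>k. secS \<omega> (c k) (b k) i) [1..<n+1]) id"
    let ?cn = "\<lambda>i. length (filter (\<lambda>k. (int i - c k) mod 3 = 2) [1..<n+1])"
    let ?w = "\<lambda>i. wnorm m (shift \<omega>) (sect g i)"
    have sect: "sect g i = ?Sec i" if "i < 3" for i
      by (rule sect_eq[OF _ bc gdef that]) (rule H2)
    have wle: "\<forall>i<3. ?w i \<le> ?cn i"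
    proof (intro allI impI)
      fix i :: nat assume "i < 3"
      then show "?w i \<le> ?cn i" unfolding sect[OF \<open>i < 3\<close>]
        by (rule_tac sec_wnorm_le) (auto intro: H2 simp: bc')
    qed
    have wy: "?w y + 1 \<le> ?cn y"
      unfolding sect[OF y3] by (rule sec_merge[OF _ _ bc k q0 q1 q2]) (auto intro: H1 H2)
    have "(\<Sum>i<3. ?w i) + 1 \<le> (\<Sum>i<3. ?cn i)" by (rule sum3_lemma[OF wle y3 wy])
    also have "\<dots> = n" using count_sum[of c "[1..<n+1]"] by simp
    finally have "(\<Sum>i<3. ?w i) + 1 \<le> n" .
    moreover have "(\<Sum>i<3. ?w i) = n"
      using inc norm unfolding incompr_inf_def by (metis incompr.simps(2) One_nat_def order_refl)
    ultimately show False by simp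
  qed
  show ?thesis using comb[OF h1 h2 n1] unfolding d_def by simp
qed
end
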